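(* Let $\nu>\tfrac14$ and $\kappa>0$. Let $g_k, g_{k+1}, d_k\in\mathbb{R}^n$ with $g_k\neq 0$ and $d_k\neq 0$. Define $$\beta_k=\min\Big\{\frac{\big\langle g_{k+1},\, g_{k+1}-g_k-\frac{\nu\|g_{k+1}-g_k\|_2^2}{\|g_k\|_2^2}\,d_k\big\rangle_{+}}{\|g_k\|_2^2},\ \frac{\kappa\|g_{k+1}\|_2}{\|d_k\|_2}\Big\},$$ where $t_+=\max\{t,0\}$, and $d_{k+1}=-g_{k+1}+\beta_k d_k$. Then, with $\mu=\frac{4\nu-1}{4\nu(1+\kappa)}$, $$\langle d_{k+1},g_{k+1}\rangle\le -\mu\,\|d_{k+1}\|_2\,\|g_{k+1}\|_2 .$$
   Context: $\langle\cdot,\cdot\rangle$ is the Euclidean inner product and $\|\cdot\|=\|\cdot\|_2$ the Euclidean norm on $\mathbb{R}^n$. *)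

theory Defs
  imports "HOL-Analysis.Analysis"
begin

end

theory Submission
  imports Defs
begin

theorem lemma1:
  fixes g_k g_k1 d_k :: "real ^ 'n" and \<nu> \<kappa> :: real
  assumes "\<nu> > 1/4" and "\<kappa> > 0" and "g_k \<noteq> 0" and "d_k \<noteq> 0"
  shows "let \<beta> = min (max (g_k1 \<bullet> (g_k1 - g_k - (\<nu> * (norm (g_k1 - g_k))^2 / (norm g_k)^2) *\<^sub>R d_k)) 0
                          / (norm g_k)^2)
                     (\<kappa> * norm g_k1 / norm d_k);
             d_k1 = - g_k1 + \<beta> *\<^sub>R d_k;
             \<mu> = (4 * \<nu> - 1) / (4 * \<nu> * (1 + \<kappa>))
         in d_k1 \<bullet> g_k1 \<le> - \<mu> * norm d_k1 * norm g_k1"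
proof -
  define a where "a = (norm g_k)^2"
  define y where "y = g_k1 - g_k"
  define t where "t = (d_k \<bullet> g_k1) / a"
  define X where "X = g_k1 \<bullet> y - \<nu> * (norm y)^2 * t"
  define \<beta> where "\<beta> = min (max (g_k1 \<bullet> (g_k1 - g_k - (\<nu> * (norm (g_k1 - g_k))^2 / (norm g_k)^2) *\<^sub>R d_k)) 0
                          / (norm g_k)^2)
                     (\<kappa> * norm g_k1 / norm d_k)"
  define d1 where "d1 = - g_k1 + \<beta> *\<^sub>R d_k"
  define \<mu> where "\<mu> = (4 * \<nu> - 1) / (4 * \<nu> * (1 + \<kappa>))"
  have a0: "a > 0" using assms(3) by (simp add: a_def)
  have nd: "norm d_k > 0" using assms(4) by simp
  have Xeq: "g_k1 \<bullet> (g_k1 - g_k - (\<nu> * (norm (g_k1 - g_k))^2 / (norm g_k)^2) *\<^sub>R d_k) = X"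
    by (simp add: X_def y_def t_def a_def inner_diff_right inner_commute algebra_simps)
  have b0: "\<beta> \<ge> 0" unfolding \<beta>_def using a0 nd assms(2) by (auto simp: a_def intro!: divide_nonneg_pos)
  have bk: "\<beta> \<le> \<kappa> * norm g_k1 / norm d_k" unfolding \<beta>_def by simp
  have bX: "\<beta> \<le> max X 0 / a" unfolding \<beta>_def Xeq a_def by simp
  have key: "\<beta> * (d_k \<bullet> g_k1) \<le> (norm g_k1)^2 / (4*\<nu>)"
  proof (cases "d_k \<bullet> g_k1 \<le> 0")
    case True
    have "\<beta> * (d_k \<bullet> g_k1) \<le> 0" using True b0 by (simp add: mult_nonneg_nonpos)
    also have "0 \<le> (norm g_k1)^2 / (4*\<nu>)" using assms(1) by simp
    finally show ?thesis .
  next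
    case False
    hence t0: "t > 0" using a0 by (simp add: t_def)
    have dg: "d_k \<bullet> g_k1 = t * a" using a0 by (simp add: t_def)
    show ?thesis
    proof (cases "X \<le> 0")
      case True
      hence "\<beta> \<le> 0" using bX by simp
      hence "\<beta> = 0" using b0 by simp
      thus ?thesis using assms(1) by simp
    next
      case False
      hence "\<beta> \<le> X / a" using bX by simp
      hence "\<beta> * a \<le> X" using a0 by (simp add: field_simps)
      hence "\<beta> * (d_k \<bullet> g_k1) \<le> X * t" using t0 dg
        by (metis mult.assoc mult.commute mult_right_mono less_imp_le)
      also have "X * t \<le> norm g_k1 * (norm y * t) - \<nu> * (norm y * t)^2"
      proof -
        have "g_k1 \<bullet> y \<le> norm g_k1 * norm y" by (rule norm_cauchy_schwarz)
        hence "(g_k1 \<bullet> y) * t \<le> norm g_k1 * norm y * t" using t0 by (simp add: mult_right_mono)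
        thus ?thesis by (simp add: X_def power2_eq_square algebra_simps)
      qed
      also have "\<dots> \<le> (norm g_k1)^2 / (4*\<nu>)"
      proof -
        have sq: "0 \<le> (2*\<nu>*(norm y * t) - norm g_k1)^2" by simp
        have "4*\<nu>*(norm g_k1 * (norm y * t) - \<nu> * (norm y * t)^2) \<le> (norm g_k1)^2"
          using sq by (simp add: power2_eq_square algebra_simps)
        thus ?thesis using assms(1) by (simp add: field_simps)
      qed
      finally show ?thesis .
    qed
  qed
  have nd1: "norm d1 \<le> (1+\<kappa>) * norm g_k1"
  proof -
    have "norm d1 \<le> norm g_k1 + \<beta> * norm d_k" unfolding d1_def
      using norm_triangle_ineq[of "- g_k1" "\<beta> *\<^sub>R d_k"] b0 by simp
    also have "\<beta> * norm d_k \<le> \<kappa> * norm g_k1" using bk nd by (simp add: field_simps)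
    finally show ?thesis by (simp add: algebra_simps)
  qed
  have ip: "d1 \<bullet> g_k1 = \<beta> * (d_k \<bullet> g_k1) - (norm g_k1)^2"
    unfolding d1_def by (simp add: inner_diff_left power2_norm_eq_inner)
  have m0: "\<mu> \<ge> 0" unfolding \<mu>_def using assms(1,2) by (intro divide_nonneg_pos) auto
  have "\<mu> * norm d1 * norm g_k1 \<le> \<mu> * ((1+\<kappa>) * norm g_k1) * norm g_k1"
    using nd1 m0 by (intro mult_right_mono mult_left_mono) auto
  also have "\<dots> = (4*\<nu>-1)/(4*\<nu>) * (norm g_k1)^2"
  proof -
    have "\<mu> * (1+\<kappa>) = (4*\<nu>-1)/(4*\<nu>)" unfolding \<mu>_def proof -
      have "4*\<nu>*(1+\<kappa>) > 0" using assms(1,2) by simp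
      hence h: "4*\<nu>*(1+\<kappa>) \<noteq> 0" "1+\<kappa> \<noteq> 0" "\<nu> \<noteq> 0" using assms(1,2) by auto
      have "(4 * \<nu> - 1) / (4 * \<nu> * (1 + \<kappa>)) * (1 + \<kappa>) = (4 * \<nu> - 1) * (1 + \<kappa>) / (4 * \<nu> * (1 + \<kappa>))" by simp
      also have "\<dots> = (4*\<nu>-1)/(4*\<nu>)" using h by (metis mult_divide_mult_cancel_right)
      finally show "(4 * \<nu> - 1) / (4 * \<nu> * (1 + \<kappa>)) * (1 + \<kappa>) = (4*\<nu>-1)/(4*\<nu>)" .
    qed
    thus ?thesis by (simp add: power2_eq_square mult.assoc[symmetric])
  qed
  finally have "\<mu> * norm d1 * norm g_k1 \<le> (4*\<nu>-1)/(4*\<nu>) * (norm g_k1)^2" .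
  moreover have "(4*\<nu>-1)/(4*\<nu>) * (norm g_k1)^2 = (norm g_k1)^2 - (norm g_k1)^2/(4*\<nu>)"
    using assms(1) by (simp add: field_simps)
  ultimately have "d1 \<bullet> g_k1 \<le> - \<mu> * norm d1 * norm g_k1" using ip key by linarith
  thus ?thesis unfolding Let_def \<beta>_def[symmetric] d1_def[symmetric] \<mu>_def[symmetric] .
qed

end
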